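(* Let $n\ge 2$ and let $\mathrm{Dic}_n=\langle a,b : a^n=b^2,\ a^{2n}=e,\ b^{-1}ab=a^{-1}\rangle$ be the dicyclic group of order $4n$. Let $H$ be a normal subgroup of $\mathrm{Dic}_n$. Then $\Gamma_{\mathrm{Dic}_n,H}$ admits a perfect code if and only if either $H=\mathrm{Dic}_n$, or $H=\langle a^t\rangle$ for a positive divisor $t$ of $2n$ such that $2n/t$ is odd or $2n/t=2$.
   Context: For a normal subgroup $H$ of a finite group $G$ with identity $e$, the subgroup sum graph $\Gamma_{G,H}$ is the simple undirected graph with vertex set $G$ in which distinct vertices $x,y$ are adjacent if and only if $xy\in H\setminus\{e\}$. A perfect code in a graph is a set $C$ of vertices that is independent and such that every vertex not in $C$ is adjacent to exactly one vertex of $C$. *)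

theory Defs
  imports "HOL-Algebra.Algebra"
begin

text \<open>Dicyclic group of order 4n, concretely: the pair (i,j) with 0 \<le> i < 2n, j \<in> {0,1}
  stands for a^i b^j.  Using b a = a^{-1} b and b^2 = a^n:
  (a^i b^j)(a^k b^l) = a^(i + (-1)^j k + n [j=l=1]) b^((j+l) mod 2).\<close>

definition Dic :: "nat \<Rightarrow> (int \<times> int) monoid" where
  "Dic n = \<lparr> carrier = {0..<2 * int n} \<times> {0..<2},
             monoid.mult = (\<lambda>x y. let i = fst x; j = snd x; k = fst y; l = snd y in
                ((i + (if j = 0 then k else - k) + (if j = 1 \<and> l = 1 then int n else 0))
                   mod (2 * int n),
                 (j + l) mod 2)),
             monoid.one = (0, 0) \<rparr>"

definition dic_a :: "nat \<Rightarrow> int \<times> int" where "dic_a n = (1, 0)"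
definition dic_b :: "nat \<Rightarrow> int \<times> int" where "dic_b n = (0, 1)"

definition sum_adj :: "('a, 'b) monoid_scheme \<Rightarrow> 'a set \<Rightarrow> 'a \<Rightarrow> 'a \<Rightarrow> bool" where
  "sum_adj G H x y \<longleftrightarrow> x \<in> carrier G \<and> y \<in> carrier G \<and> x \<noteq> y \<and>
     x \<otimes>\<^bsub>G\<^esub> y \<in> H - {\<one>\<^bsub>G\<^esub>}"

definition perfect_code :: "('a, 'b) monoid_scheme \<Rightarrow> 'a set \<Rightarrow> 'a set \<Rightarrow> bool" where
  "perfect_code G H C \<longleftrightarrow> C \<subseteq> carrier G \<and>
     (\<forall>x\<in>C. \<forall>y\<in>C. \<not> sum_adj G H x y) \<and>
     (\<forall>x\<in>carrier G - C. \<exists>!c. c \<in> C \<and> sum_adj G H x c)"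

end

theory Submission
  imports Defs
begin

context group begin

lemma nrm_comm:
  assumes "H \<lhd> G" "x \<in> carrier G" "y \<in> carrier G" "x \<otimes> y \<in> H"
  shows "y \<otimes> x \<in> H"
proof -
  have "inv x \<otimes> (x \<otimes> y) \<otimes> x \<in> H" using normal.inv_op_closed1[OF assms(1) assms(2) assms(4)] .
  moreover have "inv x \<otimes> (x \<otimes> y) \<otimes> x = y \<otimes> x"
    using assms by (simp add: m_assoc[symmetric])
  ultimately show ?thesis by simp
qed

lemma cancel1 [simp]: "z \<in> carrier G \<Longrightarrow> y \<in> carrier G \<Longrightarrow> z \<otimes> inv y \<otimes> y = z"
  by (simp add: m_assoc l_inv)
lemma cancel2 [simp]: "z \<in> carrier G \<Longrightarrow> y \<in> carrier G \<Longrightarrow> z \<otimes> y \<otimes> inv y = z"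
  by (simp add: m_assoc r_inv)

lemma cancel3 [simp]: "z \<in> carrier G \<Longrightarrow> y \<in> carrier G \<Longrightarrow> y \<otimes> (inv y \<otimes> z) = z"
  by (simp add: m_assoc[symmetric] r_inv)
lemma cancel4 [simp]: "z \<in> carrier G \<Longrightarrow> y \<in> carrier G \<Longrightarrow> inv y \<otimes> (y \<otimes> z) = z"
  by (simp add: m_assoc[symmetric] l_inv)

definition SS :: "'a set \<Rightarrow> 'a \<Rightarrow> 'a set" where
  "SS H x = {z \<in> carrier G. z \<otimes> inv x \<in> H \<or> z \<otimes> x \<in> H}"

lemma SS_sub:
  assumes N: "H \<lhd> G" and x: "x \<in> carrier G" and y: "y \<in> SS H x"
  shows "SS H y \<subseteq> SS H x"
proof
  have sg: "subgroup H G" using N normal_imp_subgroup by blast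
  have yc: "y \<in> carrier G" using y by (simp add: SS_def)
  fix z assume z: "z \<in> SS H y"
  have zc: "z \<in> carrier G" using z by (simp add: SS_def)
  from y have "y \<otimes> inv x \<in> H \<or> y \<otimes> x \<in> H" by (simp add: SS_def)
  then show "z \<in> SS H x"
  proof
    assume h: "y \<otimes> inv x \<in> H"
    from z have "z \<otimes> inv y \<in> H \<or> z \<otimes> y \<in> H" by (simp add: SS_def)
    then show ?thesis
    proof
      assume "z \<otimes> inv y \<in> H"
      then have "(z \<otimes> inv y) \<otimes> (y \<otimes> inv x) \<in> H" using subgroup.m_closed[OF sg _ h] by simp
      moreover have "(z \<otimes> inv y) \<otimes> (y \<otimes> inv x) = z \<otimes> inv x"
        using zc yc x by (simp add: m_assoc[symmetric] r_inv)
      ultimately show ?thesis using zc by (simp add: SS_def)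
    next
      assume zy: "z \<otimes> y \<in> H"
      have "inv x \<otimes> y \<in> H" using nrm_comm[OF N yc _ h] x by simp
      then have "(z \<otimes> y) \<otimes> inv (inv x \<otimes> y) \<in> H" using subgroup.m_closed[OF sg zy subgroup.m_inv_closed[OF sg]] by simp
      moreover have "(z \<otimes> y) \<otimes> inv (inv x \<otimes> y) = z \<otimes> x"
        using zc yc x by (simp add: inv_mult_group m_assoc)
      ultimately show ?thesis using zc by (simp add: SS_def)
    qed
  next
    assume h: "y \<otimes> x \<in> H"
    from z have "z \<otimes> inv y \<in> H \<or> z \<otimes> y \<in> H" by (simp add: SS_def)
    then show ?thesis
    proof
      assume "z \<otimes> inv y \<in> H"
      then have "(z \<otimes> inv y) \<otimes> (y \<otimes> x) \<in> H" using subgroup.m_closed[OF sg _ h] by simp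
      moreover have "(z \<otimes> inv y) \<otimes> (y \<otimes> x) = z \<otimes> x"
        using zc yc x by (simp add: m_assoc[symmetric] r_inv)
      ultimately show ?thesis using zc by (simp add: SS_def)
    next
      assume zy: "z \<otimes> y \<in> H"
      have "x \<otimes> y \<in> H" using nrm_comm[OF N yc x h] by simp
      then have "(z \<otimes> y) \<otimes> inv (x \<otimes> y) \<in> H" using subgroup.m_closed[OF sg zy subgroup.m_inv_closed[OF sg]] by simp
      moreover have "(z \<otimes> y) \<otimes> inv (x \<otimes> y) = z \<otimes> inv x"
        using zc yc x by (simp add: inv_mult_group m_assoc)
      ultimately show ?thesis using zc by (simp add: SS_def)
    qed
  qed
qed

lemma SS_sym:
  assumes N: "H \<lhd> G" and x: "x \<in> carrier G" and y: "y \<in> SS H x"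
  shows "x \<in> SS H y"
proof -
  have sg: "subgroup H G" using N normal_imp_subgroup by blast
  have yc: "y \<in> carrier G" using y by (simp add: SS_def)
  from y have "y \<otimes> inv x \<in> H \<or> y \<otimes> x \<in> H" by (simp add: SS_def)
  then show ?thesis
  proof
    assume "y \<otimes> inv x \<in> H"
    then have "inv (y \<otimes> inv x) \<in> H" using subgroup.m_inv_closed[OF sg] by simp
    then show ?thesis using x yc by (simp add: SS_def inv_mult_group)
  next
    assume "y \<otimes> x \<in> H"
    then show ?thesis using nrm_comm[OF N yc x] x by (simp add: SS_def)
  qed
qed

lemma SS_eq:
  assumes N: "H \<lhd> G" and x: "x \<in> carrier G" and y: "y \<in> SS H x"
  shows "SS H y = SS H x"
  using SS_sub[OF N x y] SS_sub[OF N _ SS_sym[OF N x y]] y by (auto simp: SS_def)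

lemma SS_self: "x \<in> carrier G \<Longrightarrow> H \<lhd> G \<Longrightarrow> x \<in> SS H x"
  using normal_imp_subgroup subgroup.one_closed by (fastforce simp: SS_def)


definition rep :: "'a set \<Rightarrow> 'a \<Rightarrow> 'a" where
  "rep H x = (SOME y. y \<in> SS H x \<and> ((\<exists>z\<in>SS H x. z \<otimes> z = \<one>) \<longrightarrow> y \<otimes> y = \<one>))"

lemma rep_prop:
  assumes "x \<in> carrier G" "H \<lhd> G"
  shows "rep H x \<in> SS H x \<and> ((\<exists>z\<in>SS H x. z \<otimes> z = \<one>) \<longrightarrow> rep H x \<otimes> rep H x = \<one>)"
proof -
  have "\<exists>y. y \<in> SS H x \<and> ((\<exists>z\<in>SS H x. z \<otimes> z = \<one>) \<longrightarrow> y \<otimes> y = \<one>)"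
    using SS_self[OF assms] by blast
  then show ?thesis unfolding rep_def by (rule someI_ex)
qed

lemma rep_eq:
  assumes N: "H \<lhd> G" and x: "x \<in> carrier G" and y: "y \<in> SS H x"
  shows "rep H y = rep H x"
  unfolding rep_def using SS_eq[OF N x y] by simp

lemma sq_one_inv: "r \<in> carrier G \<Longrightarrow> r \<otimes> r = \<one> \<Longrightarrow> inv r = r"
  by (rule inv_equality) auto

lemma pc_suff:
  assumes N: "H \<lhd> G"
    and cond: "(\<forall>u\<in>H. \<forall>v\<in>H. u \<noteq> \<one> \<longrightarrow> v \<noteq> \<one> \<longrightarrow> u = v) \<or>
       (\<forall>g\<in>carrier G. g \<otimes> g \<in> H \<longrightarrow> (\<exists>z\<in>carrier G. z \<otimes> inv g \<in> H \<and> z \<otimes> z = \<one>))"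
  shows "\<exists>C. perfect_code G H C"
proof -
  have sg: "subgroup H G" using N normal_imp_subgroup by blast
  define C where "C = {y \<in> carrier G. rep H y = y \<or> rep H y = inv y}"
  have adjSS: "y \<in> SS H x" if "sum_adj G H x y" for x y
  proof -
    have "x \<in> carrier G" "y \<in> carrier G" "x \<otimes> y \<in> H" using that by (auto simp: sum_adj_def)
    then have "y \<otimes> x \<in> H" using nrm_comm[OF N] by blast
    then show ?thesis using \<open>y \<in> carrier G\<close> by (simp add: SS_def)
  qed
  have indep: "\<not> sum_adj G H x y" if "x \<in> C" "y \<in> C" for x y
  proof
    assume a: "sum_adj G H x y"
    have xc: "x \<in> carrier G" and yc: "y \<in> carrier G" and ne: "x \<noteq> y"
      and p: "x \<otimes> y \<in> H" "x \<otimes> y \<noteq> \<one>" using a by (auto simp: sum_adj_def)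
    have "rep H y = rep H x" using rep_eq[OF N xc adjSS[OF a]] .
    then have "(rep H x = x \<or> rep H x = inv x) \<and> (rep H x = y \<or> rep H x = inv y)"
      using that by (auto simp: C_def)
    then have "x = inv y \<or> y = inv x \<or> inv x = inv y \<or> x = y" by auto
    moreover have "inv x \<noteq> inv y" using ne xc yc by (metis inv_inv)
    ultimately have "x = inv y \<or> y = inv x" using ne by blast
    then show False using p xc yc by (auto simp: l_inv r_inv)
  qed
  have uniq_aux: "c = rep H x \<or> c = inv (rep H x)" if c: "c \<in> C" and adj: "sum_adj G H x c" for x c
  proof -
    have xc: "x \<in> carrier G" and cc: "c \<in> carrier G" using adj by (auto simp: sum_adj_def)
    have e: "rep H c = rep H x" using rep_eq[OF N xc adjSS[OF adj]] .
    have "rep H c = c \<or> rep H c = inv c" using c by (simp add: C_def)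
    then show ?thesis using e cc by (metis inv_inv)
  qed
  have cover: "\<exists>!c. c \<in> C \<and> sum_adj G H x c" if x: "x \<in> carrier G" "x \<notin> C" for x
  proof -
    define r where "r = rep H x"
    have rS: "r \<in> SS H x" and rinv: "(\<exists>z\<in>SS H x. z \<otimes> z = \<one>) \<longrightarrow> r \<otimes> r = \<one>"
      using rep_prop[OF x(1) N] r_def by auto
    have rc: "r \<in> carrier G" using rS by (simp add: SS_def)
    have rx: "r \<noteq> x" "r \<noteq> inv x" using x r_def by (auto simp: C_def)
    have repr: "rep H r = r" using rep_eq[OF N x(1) rS] r_def by simp
    have ex: "\<exists>c. c \<in> C \<and> sum_adj G H x c"
    proof (cases "r \<otimes> x \<in> H")
      case True
      have "x \<otimes> r \<in> H" using nrm_comm[OF N rc x(1) True] .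
      moreover have "x \<otimes> r \<noteq> \<one>" using rx x rc by (metis inv_equality inv_inv)
      ultimately have "sum_adj G H x r" using rx x rc by (auto simp: sum_adj_def)
      moreover have "r \<in> C" using repr rc by (simp add: C_def)
      ultimately show ?thesis by blast
    next
      case False
      then have h: "r \<otimes> inv x \<in> H" using rS by (simp add: SS_def)
      have "inv (r \<otimes> inv x) \<in> H" using subgroup.m_inv_closed[OF sg h] .
      then have xr: "x \<otimes> inv r \<in> H" using rc x by (simp add: inv_mult_group)
      have xr1: "x \<otimes> inv r \<noteq> \<one>" using rx x rc by (metis inv_equality inv_inv inv_closed)
      have xr2: "x \<noteq> inv r" using rx x rc by (metis inv_inv)
      have irS: "inv r \<in> SS H x" using nrm_comm[OF N x(1) _ xr] rc by (simp add: SS_def)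
      have "rep H (inv r) = r" using rep_eq[OF N x(1) irS] r_def by simp
      then have "inv r \<in> C" using rc by (simp add: C_def)
      moreover have "sum_adj G H x (inv r)" using xr xr1 xr2 x rc by (auto simp: sum_adj_def)
      ultimately show ?thesis by blast
    qed
    have no2: "\<not> (x \<otimes> r \<in> H \<and> x \<otimes> r \<noteq> \<one> \<and> x \<otimes> inv r \<in> H \<and> x \<otimes> inv r \<noteq> \<one> \<and> r \<noteq> inv r)"
    proof
      assume a: "x \<otimes> r \<in> H \<and> x \<otimes> r \<noteq> \<one> \<and> x \<otimes> inv r \<in> H \<and> x \<otimes> inv r \<noteq> \<one> \<and> r \<noteq> inv r"
      from cond show False
      proof
        assume "\<forall>u\<in>H. \<forall>v\<in>H. u \<noteq> \<one> \<longrightarrow> v \<noteq> \<one> \<longrightarrow> u = v"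
        then have "x \<otimes> r = x \<otimes> inv r" using a by blast
        then have "r = inv r" using x rc by (metis l_cancel inv_closed)
        then show False using a by simp
      next
        assume c2: "\<forall>g\<in>carrier G. g \<otimes> g \<in> H \<longrightarrow> (\<exists>z\<in>carrier G. z \<otimes> inv g \<in> H \<and> z \<otimes> z = \<one>)"
        have "inv (x \<otimes> inv r) \<otimes> (x \<otimes> r) \<in> H" using a subgroup.m_closed[OF sg subgroup.m_inv_closed[OF sg]] by simp
        moreover have "inv (x \<otimes> inv r) \<otimes> (x \<otimes> r) = r \<otimes> r" using x rc
          by (simp add: inv_mult_group m_assoc[symmetric])
        ultimately have "r \<otimes> r \<in> H" by simp
        then obtain z where z: "z \<in> carrier G" "z \<otimes> inv r \<in> H" "z \<otimes> z = \<one>" using c2 rc by blast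
        have "z \<in> SS H r" using z by (simp add: SS_def)
        then have "z \<in> SS H x" using SS_eq[OF N x(1) rS] by simp
        then have "r \<otimes> r = \<one>" using rinv z by blast
        then show False using a sq_one_inv[OF rc] by simp
      qed
    qed
    show ?thesis
    proof (rule ex_ex1I[OF ex])
      fix c c' assume c: "c \<in> C \<and> sum_adj G H x c" and c': "c' \<in> C \<and> sum_adj G H x c'"
      have "c = r \<or> c = inv r" "c' = r \<or> c' = inv r" using uniq_aux c c' r_def by auto
      moreover have "x \<otimes> c \<in> H \<and> x \<otimes> c \<noteq> \<one>" "x \<otimes> c' \<in> H \<and> x \<otimes> c' \<noteq> \<one>"
        using c c' by (auto simp: sum_adj_def)
      ultimately show "c = c'" using no2 by auto
    qed
  qed
  have "perfect_code G H C"
    unfolding perfect_code_def using indep cover by (auto simp: C_def)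
  then show ?thesis by blast
qed


lemma pc_nec:
  assumes N: "H \<lhd> G" and pc: "perfect_code G H C"
    and g: "g \<in> carrier G" "g \<otimes> g \<in> H"
    and noinv: "\<forall>z\<in>carrier G. z \<otimes> inv g \<in> H \<longrightarrow> z \<otimes> z \<noteq> \<one>"
    and h12: "h1 \<in> H" "h2 \<in> H" "h1 \<noteq> \<one>" "h2 \<noteq> \<one>" "h1 \<noteq> h2"
  shows False
proof -
  have sg: "subgroup H G" using N normal_imp_subgroup by blast
  have Cc: "C \<subseteq> carrier G" and ind: "\<forall>x\<in>C. \<forall>y\<in>C. \<not> sum_adj G H x y"
    and cov: "\<forall>x\<in>carrier G - C. \<exists>!c. c \<in> C \<and> sum_adj G H x c"
    using pc by (auto simp: perfect_code_def)
  have hc: "h1 \<in> carrier G" "h2 \<in> carrier G" using h12 subgroup.mem_carrier[OF sg] by auto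
  obtain c where c: "c \<in> C" "c \<otimes> inv g \<in> H"
  proof (cases "g \<in> C")
    case True
    have "g \<otimes> inv g \<in> H" using g(1) subgroup.one_closed[OF sg] by (simp add: r_inv)
    then show ?thesis using that True by blast
  next
    case False
    then obtain c where c: "c \<in> C" "sum_adj G H g c" using cov g(1) by blast
    have cc: "c \<in> carrier G" using c Cc by blast
    have "g \<otimes> c \<in> H" using c(2) by (simp add: sum_adj_def)
    then have "c \<otimes> g \<in> H" using nrm_comm[OF N g(1) cc] by simp
    then have "(c \<otimes> g) \<otimes> inv (g \<otimes> g) \<in> H"
      using subgroup.m_closed[OF sg _ subgroup.m_inv_closed[OF sg g(2)]] by simp
    moreover have "(c \<otimes> g) \<otimes> inv (g \<otimes> g) = c \<otimes> inv g"
      using cc g(1) by (simp add: inv_mult_group m_assoc[symmetric])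
    ultimately show ?thesis using that c(1) by simp
  qed
  have cc: "c \<in> carrier G" using c Cc by blast
  define k where "k = c \<otimes> inv g"
  have kc: "k \<in> carrier G" using cc g k_def by simp
  have "g \<otimes> k \<otimes> inv g \<in> H" using normal.inv_op_closed2[OF N g(1)] c(2) k_def by simp
  then have "k \<otimes> (g \<otimes> k \<otimes> inv g) \<otimes> (g \<otimes> g) \<in> H"
    using subgroup.m_closed[OF sg subgroup.m_closed[OF sg] g(2)] c(2) k_def by simp
  moreover have "k \<otimes> (g \<otimes> k \<otimes> inv g) \<otimes> (g \<otimes> g) = c \<otimes> c"
    using cc g(1) k_def by (simp add: m_assoc l_inv)
  ultimately have ccH: "c \<otimes> c \<in> H" by simp
  have cc1: "c \<otimes> c \<noteq> \<one>" using noinv cc c(2) by blast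
  have cic: "c \<noteq> inv c" using cc1 cc by (metis r_inv)
  obtain h where h: "h \<in> H" "h \<noteq> \<one>" "h \<otimes> c \<noteq> inv c"
  proof -
    have "\<not> (h1 \<otimes> c = inv c \<and> h2 \<otimes> c = inv c)"
      using h12 hc cc by (metis r_cancel)
    then show ?thesis using that h12 by blast
  qed
  have hcar: "h \<in> carrier G" using h subgroup.mem_carrier[OF sg] by auto
  define y where "y = h \<otimes> c"
  have yc: "y \<in> carrier G" using y_def hcar cc by simp
  have "h \<otimes> (c \<otimes> c) \<in> H" using subgroup.m_closed[OF sg h(1) ccH] .
  then have ycH: "y \<otimes> c \<in> H" using y_def hcar cc by (simp add: m_assoc)
  have yne: "y \<noteq> c" using h(2) hcar cc y_def by (metis l_one r_cancel one_closed)
  have yc1: "y \<otimes> c \<noteq> \<one>" using h(3) y_def yc cc by (metis inv_equality)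
  have adj1: "sum_adj G H y c" using yc cc yne ycH yc1 by (simp add: sum_adj_def)
  have yC: "y \<notin> C" using ind adj1 c(1) by blast
  show False
  proof (cases "inv c \<in> C")
    case True
    have "y \<otimes> inv c = h" using y_def hcar cc by (simp add: m_assoc r_inv)
    then have adj2: "sum_adj G H y (inv c)" using yc cc h h(3) y_def by (simp add: sum_adj_def)
    have "\<exists>!d. d \<in> C \<and> sum_adj G H y d" using cov yc yC by blast
    then show False using adj1 adj2 True c(1) cic by blast
  next
    case False
    then obtain d where d: "d \<in> C" "sum_adj G H (inv c) d" using cov cc by blast
    have dc: "d \<in> carrier G" using d Cc by blast
    have d1: "inv c \<otimes> d \<in> H" "inv c \<otimes> d \<noteq> \<one>" "inv c \<noteq> d" using d(2) by (auto simp: sum_adj_def)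
    have "(c \<otimes> c) \<otimes> (inv c \<otimes> d) \<in> H" using subgroup.m_closed[OF sg ccH d1(1)] .
    then have cdH: "c \<otimes> d \<in> H" using cc dc by (simp add: m_assoc)
    have cd1: "c \<otimes> d \<noteq> \<one>" using d1(3) cc dc by (metis inv_equality inv_inv)
    have cd: "c \<noteq> d" using d1(2) cc by (metis l_inv)
    have "sum_adj G H c d" using cc dc cdH cd1 cd by (simp add: sum_adj_def)
    then show False using ind c(1) d(1) by blast
  qed
qed

end


lemma mod_helper: "(a mod m - b + c) mod m = (a - b + c) mod (m::int)"
proof -
  have "(a mod m - b + c) mod m = (a mod m + (c - b)) mod m" by (simp add: algebra_simps)
  also have "\<dots> = (a + (c - b)) mod m" by (rule mod_add_left_eq)
  also have "\<dots> = (a - b + c) mod m" by (simp add: algebra_simps)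
  finally show ?thesis .
qed

lemma mod_helper2: "(a mod m + 1) mod m = (1 + a) mod (m::int)"
  using mod_add_left_eq[of a m 1] by (simp add: add.commute)

lemma Dic_carrier: "x \<in> carrier (Dic n) \<longleftrightarrow> 0 \<le> fst x \<and> fst x < 2 * int n \<and> (snd x = 0 \<or> snd x = 1)"
  by (cases x) (auto simp: Dic_def)

lemma Dic_one: "\<one>\<^bsub>Dic n\<^esub> = (0, 0)" by (simp add: Dic_def)

lemma Dic_mult: "(i, j) \<otimes>\<^bsub>Dic n\<^esub> (k, l) =
   ((i + (if j = 0 then k else - k) + (if j = 1 \<and> l = 1 then int n else 0)) mod (2 * int n), (j + l) mod 2)"
  by (simp add: Dic_def Let_def)

lemma Dic_inv0:
  assumes "group (Dic n)" "0 \<le> i" "i < 2 * int n"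
  shows "inv\<^bsub>Dic n\<^esub> (i, 0) = ((- i) mod (2 * int n), 0)"
proof -
  have "n > 0" using assms by auto
  show ?thesis
    apply (rule group.inv_equality[OF assms(1)])
    using assms \<open>n > 0\<close> by (auto simp: Dic_mult Dic_one Dic_carrier mod_add_left_eq)
qed

lemma Dic_inv1:
  assumes "group (Dic n)" "0 \<le> i" "i < 2 * int n"
  shows "inv\<^bsub>Dic n\<^esub> (i, 1) = ((i + int n) mod (2 * int n), 1)"
proof -
  have "n > 0" using assms by auto
  show ?thesis
    apply (rule group.inv_equality[OF assms(1)])
    using assms \<open>n > 0\<close> by (auto simp: Dic_mult Dic_one Dic_carrier mod_helper)
qed

lemma Dic_pow:
  assumes "group (Dic n)"
  shows "(1::int, 0::int) [^]\<^bsub>Dic n\<^esub> (k::nat) = (int k mod (2 * int n), 0)"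
proof (induction k)
  case 0 then show ?case by (simp add: Dic_one)
next
  case (Suc k)
  have "(1::int, 0::int) [^]\<^bsub>Dic n\<^esub> Suc k = (1::int, 0::int) [^]\<^bsub>Dic n\<^esub> k \<otimes>\<^bsub>Dic n\<^esub> (1,0)"
    using monoid.nat_pow_Suc[OF group.is_monoid[OF assms]] by blast
  then show ?case using Suc by (simp add: Dic_mult mod_helper2)
qed

lemma sq_one_Dic:
  assumes "n \<ge> 2" "z \<in> carrier (Dic n)" "z \<otimes>\<^bsub>Dic n\<^esub> z = \<one>\<^bsub>Dic n\<^esub>"
  shows "z = (0,0) \<or> z = (int n, 0)"
proof -
  obtain i j where z: "z = (i, j)" by (cases z)
  have r: "0 \<le> i" "i < 2 * int n" "j = 0 \<or> j = 1" using assms(2) z by (auto simp: Dic_carrier)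
  show ?thesis
  proof (cases "j = 0")
    case True
    then have "(i + i) mod (2 * int n) = 0" using assms(3) z by (simp add: Dic_mult Dic_one)
    then have "2 * int n dvd i + i" by (simp add: dvd_eq_mod_eq_0)
    then have "2 * int n dvd 2 * i" by (metis mult_2)
    then have "int n dvd i" by simp
    then obtain q where "i = int n * q" by blast
    moreover have "q = 0 \<or> q = 1"
    proof -
      have np: "int n > 0" using assms(1) by simp
      have "0 \<le> int n * q" using r \<open>i = int n * q\<close> by simp
      then have "0 \<le> q" using np by (simp add: zero_le_mult_iff)
      moreover have "int n * q < int n * 2" using r \<open>i = int n * q\<close> by (simp add: mult.commute)
      then have "q < 2" using np by simp
      ultimately show ?thesis by auto
    qed
    ultimately show ?thesis using z True by auto
  next
    case False
    then have "j = 1" using r by simp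
    then have "int n mod (2 * int n) = 0" using assms(3) z by (simp add: Dic_mult Dic_one)
    then show ?thesis using assms(1) by simp
  qed
qed


lemma Dic_finite: "finite (carrier (Dic n))" by (simp add: Dic_def)

definition Ht :: "nat \<Rightarrow> nat \<Rightarrow> (int \<times> int) set" where
  "Ht n t = {(j, 0) | j. 0 \<le> j \<and> j < 2 * int n \<and> int t dvd j}"

lemma Dic_gen:
  assumes grp: "group (Dic n)" and n2: "n \<ge> 2" and t: "t > 0" "t dvd 2 * n"
  shows "generate (Dic n) {dic_a n [^]\<^bsub>Dic n\<^esub> t} = Ht n t"
proof -
  have ac: "dic_a n \<in> carrier (Dic n)" using n2 by (auto simp: dic_a_def Dic_carrier)
  have xc: "dic_a n [^]\<^bsub>Dic n\<^esub> t \<in> carrier (Dic n)"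
    using monoid.nat_pow_closed[OF group.is_monoid[OF grp] ac] .
  have pw: "(dic_a n [^]\<^bsub>Dic n\<^esub> t) [^]\<^bsub>Dic n\<^esub> k = (int (t * k) mod (2 * int n), 0)" for k
    using monoid.nat_pow_pow[OF group.is_monoid[OF grp] ac] Dic_pow[OF grp] by (simp add: dic_a_def)
  have tdvd: "int t dvd 2 * int n" using t(2) by (metis of_nat_dvd_iff of_nat_mult of_nat_numeral)
  have "generate (Dic n) {dic_a n [^]\<^bsub>Dic n\<^esub> t} =
        {(dic_a n [^]\<^bsub>Dic n\<^esub> t) [^]\<^bsub>Dic n\<^esub> k | k. k \<in> (UNIV :: nat set)}"
    using group.generate_pow_on_finite_carrier[OF grp Dic_finite xc] .
  also have "\<dots> = Ht n t"
  proof (intro Set.set_eqI iffI)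
    fix x assume "x \<in> {(dic_a n [^]\<^bsub>Dic n\<^esub> t) [^]\<^bsub>Dic n\<^esub> k | k. k \<in> (UNIV :: nat set)}"
    then obtain k where x: "x = (int (t * k) mod (2 * int n), 0)" using pw by auto
    have "int t dvd int (t * k) mod (2 * int n)" using tdvd by (simp add: dvd_mod)
    moreover have "n > 0" using n2 by auto
    ultimately show "x \<in> Ht n t" using x by (auto simp: Ht_def)
  next
    fix x assume "x \<in> Ht n t"
    then obtain j where j: "x = (j, 0)" "0 \<le> j" "j < 2 * int n" "int t dvd j" by (auto simp: Ht_def)
    then obtain q where q: "j = int t * q" by blast
    have "0 \<le> q" using j(2) q t(1) by (simp add: zero_le_mult_iff)
    then have "int (t * nat q) = j" using q by simp
    then have "x = (dic_a n [^]\<^bsub>Dic n\<^esub> t) [^]\<^bsub>Dic n\<^esub> (nat q)" using pw j by simp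
    then show "x \<in> {(dic_a n [^]\<^bsub>Dic n\<^esub> t) [^]\<^bsub>Dic n\<^esub> k | k. k \<in> (UNIV :: nat set)}" by blast
  qed
  finally show ?thesis .
qed

lemma odd_split:
  fixes t m n i :: int
  assumes "t * m = 2 * n" "odd m" "t dvd 2 * i"
  shows "t dvd i \<or> t dvd (n - i)"
proof -
  have "even t" using assms(1,2) by (metis dvd_triv_left even_mult_iff)
  then obtain s where s: "t = 2 * s" by blast
  have "s dvd i" using assms(3) s by simp
  then obtain q where q: "i = s * q" by blast
  have nsm: "n = s * m" using assms(1) s by simp
  show ?thesis
  proof (cases "even q")
    case True
    then obtain r where "q = 2 * r" by blast
    then have "i = t * r" using q s by simp
    then show ?thesis by simp
  next
    case False
    then have "even (m - q)" using assms(2) by simp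
    then obtain r where r: "m - q = 2 * r" by blast
    have "n - i = s * (m - q)" using nsm q by (simp add: algebra_simps)
    then have "n - i = t * r" using r s by simp
    then show ?thesis by simp
  qed
qed


lemma Ht_n:
  assumes "n \<ge> 2" "u \<in> Ht n n" "u \<noteq> (0,0)"
  shows "u = (int n, 0)"
proof -
  obtain j where j: "u = (j, 0)" "0 \<le> j" "j < 2 * int n" "int n dvd j" using assms(2) by (auto simp: Ht_def)
  then obtain q where q: "j = int n * q" by blast
  have np: "int n > 0" using assms(1) by simp
  have "0 \<le> int n * q" using j q by simp
  then have "0 \<le> q" using np by (simp add: zero_le_mult_iff)
  moreover have "int n * q < int n * 2" using j q by (simp add: mult.commute)
  then have "q < 2" using np by simp
  ultimately have "q = 0 \<or> q = 1" by auto
  then show ?thesis using j q assms(3) by auto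
qed

lemma mod_helper4: "(a mod m - b mod m + c) mod m = (a - b + c) mod (m::int)"
  by (metis mod_add_left_eq mod_diff_eq)

theorem theorem3p15:
  fixes n :: nat and H :: "(int \<times> int) set"
  assumes "n \<ge> 2" and "H \<lhd> Dic n"
  shows "(\<exists>C. perfect_code (Dic n) H C) \<longleftrightarrow>
           (H = carrier (Dic n) \<or>
            (\<exists>t::nat. t > 0 \<and> t dvd 2 * n \<and>
               H = generate (Dic n) {dic_a n [^]\<^bsub>Dic n\<^esub> t} \<and>
               (odd (2 * n div t) \<or> 2 * n div t = 2)))"
proof -
  have grp: "group (Dic n)" using assms(2) unfolding normal_def by blast
  interpret grp: group "Dic n" by (rule grp)
  have sg: "subgroup H (Dic n)" using assms(2) normal_imp_subgroup by blast
  have Hc: "H \<subseteq> carrier (Dic n)" using sg subgroup.subset by blast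
  have one: "\<one>\<^bsub>Dic n\<^esub> = (0,0)" by (rule Dic_one)
  have np: "int n > 0" "2 * int n > 2" using assms(1) by auto
  have oneH: "(0,0) \<in> H" using subgroup.one_closed[OF sg] one by simp
  show ?thesis
  proof
    assume "\<exists>C. perfect_code (Dic n) H C"
    then obtain C where pc: "perfect_code (Dic n) H C" by blast
    note NEC = grp.pc_nec[OF assms(2) pc]
    show "H = carrier (Dic n) \<or>
            (\<exists>t::nat. t > 0 \<and> t dvd 2 * n \<and>
               H = generate (Dic n) {dic_a n [^]\<^bsub>Dic n\<^esub> t} \<and>
               (odd (2 * n div t) \<or> 2 * n div t = 2))"
    proof (cases "H = carrier (Dic n)")
      case True then show ?thesis by blast
    next
      case False
      have A: "snd x = 0" if xH: "x \<in> H" for x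
      proof (rule ccontr)
        assume "snd x \<noteq> 0"
        obtain i j where x: "x = (i, j)" by (cases x)
        have xc: "x \<in> carrier (Dic n)" using xH Hc by blast
        have ir: "0 \<le> i" "i < 2 * int n" "j = 1" using xc x \<open>snd x \<noteq> 0\<close> by (auto simp: Dic_carrier)
        have xx: "x \<otimes>\<^bsub>Dic n\<^esub> x = (int n, 0)" using x ir np by (simp add: Dic_mult)
        have nH: "(int n, 0) \<in> H" using subgroup.m_closed[OF sg xH xH] xx by simp
        have a1c: "(1, 0) \<in> carrier (Dic n)" using np by (simp add: Dic_carrier)
        have inva: "inv\<^bsub>Dic n\<^esub> (1, 0) = (2 * int n - 1, 0)"
          using Dic_inv0[OF grp, of 1] np by (simp add: zmod_zminus1_eq_if)
        have invx: "inv\<^bsub>Dic n\<^esub> x = ((i + int n) mod (2 * int n), 1)"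
          using Dic_inv1[OF grp ir(1,2)] x ir by simp
        have "(1, 0) \<otimes>\<^bsub>Dic n\<^esub> x \<otimes>\<^bsub>Dic n\<^esub> inv\<^bsub>Dic n\<^esub> (1, 0) \<in> H"
          using normal.inv_op_closed2[OF assms(2) a1c xH] .
        then have "(1, 0) \<otimes>\<^bsub>Dic n\<^esub> x \<otimes>\<^bsub>Dic n\<^esub> inv\<^bsub>Dic n\<^esub> (1, 0) \<otimes>\<^bsub>Dic n\<^esub> inv\<^bsub>Dic n\<^esub> x \<in> H"
          using subgroup.m_closed[OF sg _ subgroup.m_inv_closed[OF sg xH]] by blast
        moreover have "(1, 0) \<otimes>\<^bsub>Dic n\<^esub> x \<otimes>\<^bsub>Dic n\<^esub> inv\<^bsub>Dic n\<^esub> (1, 0) \<otimes>\<^bsub>Dic n\<^esub> inv\<^bsub>Dic n\<^esub> x = (2, 0)"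
        proof -
          have e1: "(1, 0) \<otimes>\<^bsub>Dic n\<^esub> x = ((1 + i) mod (2 * int n), 1)" using x ir by (simp add: Dic_mult)
          have e2: "((1 + i) mod (2 * int n), 1) \<otimes>\<^bsub>Dic n\<^esub> (2 * int n - 1, 0) = ((i + 2) mod (2 * int n), 1)"
            by (simp add: Dic_mult mod_helper4[of _ _ 0, simplified] mod_diff_left_eq) (simp add: algebra_simps)
          have e3: "((i + 2) mod (2 * int n), 1) \<otimes>\<^bsub>Dic n\<^esub> ((i + int n) mod (2 * int n), 1) = (2, 0)"
            using np by (simp add: Dic_mult mod_helper4)
          show ?thesis using e1 e2 e3 inva invx by simp
        qed
        ultimately have a2: "(2, 0) \<in> H" by simp
        have gg: "(1, 0) \<otimes>\<^bsub>Dic n\<^esub> (1, 0) = (2, 0)" using np by (simp add: Dic_mult)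
        have h1: "x \<noteq> \<one>\<^bsub>Dic n\<^esub>" "(int n, 0) \<noteq> \<one>\<^bsub>Dic n\<^esub>" "x \<noteq> (int n, 0)"
          using one x ir np by auto
        have "\<exists>z\<in>carrier (Dic n). z \<otimes>\<^bsub>Dic n\<^esub> inv\<^bsub>Dic n\<^esub> (1, 0) \<in> H \<and> z \<otimes>\<^bsub>Dic n\<^esub> z = \<one>\<^bsub>Dic n\<^esub>"
        proof (rule ccontr)
          assume "\<not> ?thesis"
          then show False using NEC[OF a1c _ _ xH nH h1] gg a2 by auto
        qed
        then obtain z where z: "z \<in> carrier (Dic n)" "z \<otimes>\<^bsub>Dic n\<^esub> inv\<^bsub>Dic n\<^esub> (1, 0) \<in> H" "z \<otimes>\<^bsub>Dic n\<^esub> z = \<one>\<^bsub>Dic n\<^esub>"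
          by blast
        have "z = (0,0) \<or> z = (int n, 0)" using sq_one_Dic[OF assms(1) z(1,3)] .
        then have m1: "(2 * int n - 1, 0) \<in> H"
        proof
          assume "z = (0,0)"
          then show ?thesis using z(2) inva np by (simp add: Dic_mult zmod_zminus1_eq_if)
        next
          assume "z = (int n, 0)"
          moreover have "(3 * int n - 1) mod (2 * int n) = int n - 1"
          proof -
            have "3 * int n - 1 = (int n - 1) + 2 * int n" by simp
            then have "(3 * int n - 1) mod (2 * int n) = (int n - 1) mod (2 * int n)" by (metis mod_add_self2)
            then show ?thesis using np by simp
          qed
          ultimately have "(int n - 1, 0) \<in> H" using z(2) inva np by (simp add: Dic_mult)
          then have "(int n - 1, 0) \<otimes>\<^bsub>Dic n\<^esub> (int n, 0) \<in> H" using subgroup.m_closed[OF sg _ nH] by blast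
          then show ?thesis using np by (simp add: Dic_mult zmod_zminus1_eq_if)
        qed
        have "inv\<^bsub>Dic n\<^esub> (2 * int n - 1, 0) = (1, 0)"
          using Dic_inv0[OF grp, of "2 * int n - 1"] np by (simp add: zmod_zminus1_eq_if)
        then have a1: "(1, 0) \<in> H" using subgroup.m_inv_closed[OF sg m1] by simp
        have allk: "(int k mod (2 * int n), 0) \<in> H" for k :: nat
        proof (induction k)
          case 0 then show ?case using oneH by simp
        next
          case (Suc k)
          have "(int k mod (2 * int n), 0) \<otimes>\<^bsub>Dic n\<^esub> (1, 0) \<in> H" using subgroup.m_closed[OF sg Suc a1] .
          then show ?case by (simp add: Dic_mult mod_helper2)
        qed
        have all0: "(j, 0) \<in> H" if "0 \<le> j" "j < 2 * int n" for j
          using allk[of "nat j"] that by simp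
        have "((- i) mod (2 * int n), 0) \<in> H" using all0 np by simp
        then have "((- i) mod (2 * int n), 0) \<otimes>\<^bsub>Dic n\<^esub> x \<in> H" using subgroup.m_closed[OF sg _ xH] by blast
        then have b: "(0, 1) \<in> H" using x ir by (simp add: Dic_mult mod_add_left_eq)
        have "y \<in> H" if yc: "y \<in> carrier (Dic n)" for y
        proof -
          obtain j k where y: "y = (j, k)" by (cases y)
          have r: "0 \<le> j" "j < 2 * int n" "k = 0 \<or> k = 1" using yc y by (auto simp: Dic_carrier)
          show ?thesis
          proof (cases "k = 0")
            case True then show ?thesis using all0 r y by simp
          next
            case False
            have "(j, 0) \<otimes>\<^bsub>Dic n\<^esub> (0, 1) \<in> H" using subgroup.m_closed[OF sg all0[OF r(1,2)] b] .
            then show ?thesis using r False y by (simp add: Dic_mult)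
          qed
        qed
        then have "H = carrier (Dic n)" using Hc by blast
        then show False using False by simp
      qed
      define M where "M = 2 * int n"
      have Mp: "M > 2" using np M_def by simp
      define P where "P j \<longleftrightarrow> (j mod M, 0) \<in> H" for j
      have Padd: "P (a + b)" if "P a" "P b" for a b
      proof -
        have "(a mod M, 0) \<otimes>\<^bsub>Dic n\<^esub> (b mod M, 0) \<in> H"
          using subgroup.m_closed[OF sg] that by (simp add: P_def)
        then show ?thesis by (simp add: P_def Dic_mult M_def mod_add_eq)
      qed
      have Pneg: "P (- a)" if "P a" for a
      proof -
        have "inv\<^bsub>Dic n\<^esub> (a mod M, 0) \<in> H"
          using subgroup.m_inv_closed[OF sg] that by (simp add: P_def)
        moreover have "inv\<^bsub>Dic n\<^esub> (a mod M, 0) = ((- a) mod M, 0)"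
          using Dic_inv0[OF grp, of "a mod M"] Mp by (simp add: M_def mod_minus_eq)
        ultimately show ?thesis by (simp add: P_def)
      qed
      have P0: "P 0" using oneH by (simp add: P_def)
      have PM: "P (int (2 * n))" using oneH by (simp add: P_def M_def)
      define t0 where "t0 = (LEAST t::nat. t > 0 \<and> P (int t))"
      have ex: "2 * n > 0 \<and> P (int (2 * n))" using PM assms(1) by simp
      have t0: "t0 > 0" "P (int t0)" using LeastI[of "\<lambda>t. t > 0 \<and> P (int t)", OF ex] t0_def by auto
      have t0min: "\<not> P (int s)" if "0 < s" "s < t0" for s
        using not_less_Least[of s "\<lambda>t. t > 0 \<and> P (int t)"] that t0_def by auto
      have Pmul_nat: "P (int k * int t0)" for k :: nat
      proof (induction k)
        case 0 then show ?case using P0 by simp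
      next
        case (Suc k)
        have "P (int k * int t0 + int t0)" using Padd[OF Suc t0(2)] .
        then show ?case by (simp add: algebra_simps)
      qed
      have Pmul: "P (q * int t0)" for q :: int
      proof (cases "q \<ge> 0")
        case True then show ?thesis using Pmul_nat[of "nat q"] by simp
      next
        case False
        then have "P (- (int (nat (- q)) * int t0))" using Pneg[OF Pmul_nat[of "nat (- q)"]] by simp
        then show ?thesis using False by simp
      qed
      have Pdvd: "int t0 dvd j" if "P j" for j
      proof (rule ccontr)
        assume nd: "\<not> int t0 dvd j"
        define r where "r = j mod int t0"
        have req: "r = j + (- (j div int t0)) * int t0" by (simp add: r_def algebra_simps minus_div_mult_eq_mod[symmetric])
        have Pr0: "P (j + (- (j div int t0)) * int t0)" by (rule Padd[OF that Pmul])
        have Pr: "P r" using Pr0 req by (simp only:)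
        have "0 \<le> r" "r < int t0" using t0(1) by (auto simp: r_def)
        moreover have "r \<noteq> 0" using nd by (simp add: r_def dvd_eq_mod_eq_0)
        ultimately have "0 < nat r" "nat r < t0" by auto
        then have "\<not> P (int (nat r))" using t0min by blast
        then show False using Pr \<open>0 \<le> r\<close> by simp
      qed
      have t0dvd: "t0 dvd 2 * n" using Pdvd[OF PM] by (metis of_nat_dvd_iff)
      have HHt: "H = Ht n t0"
      proof (intro Set.set_eqI iffI)
        fix x assume xH: "x \<in> H"
        obtain j k where x: "x = (j, k)" by (cases x)
        have r: "0 \<le> j" "j < M" "k = 0" using xH Hc A[OF xH] x by (auto simp: Dic_carrier M_def)
        then have "P j" using xH x by (simp add: P_def)
        then show "x \<in> Ht n t0" using Pdvd r x by (auto simp: Ht_def M_def)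
      next
        fix x assume "x \<in> Ht n t0"
        then obtain j where j: "x = (j, 0)" "0 \<le> j" "j < M" "int t0 dvd j" by (auto simp: Ht_def M_def)
        then obtain q where "j = int t0 * q" by blast
        then have "P j" using Pmul[of q] by (simp add: mult.commute)
        then show "x \<in> H" using j by (simp add: P_def)
      qed
      have gen: "H = generate (Dic n) {dic_a n [^]\<^bsub>Dic n\<^esub> t0}"
        using Dic_gen[OF grp assms(1) t0(1) t0dvd] HHt by simp
      have cond: "odd (2 * n div t0) \<or> 2 * n div t0 = 2"
      proof (rule ccontr)
        assume "\<not> ?thesis"
        then have ev: "even (2 * n div t0)" "2 * n div t0 \<noteq> 2" by auto
        define m where "m = 2 * n div t0"
        have mt: "m * t0 = 2 * n" using t0dvd m_def by simp
        have "m \<noteq> 0" proof assume "m = 0" then show False using mt assms(1) by simp qed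
        moreover have em: "even m" "m \<noteq> 2" using ev by (simp_all add: m_def)
        ultimately have m4: "m \<ge> 4" by presburger
        obtain r where r: "m = 2 * r" using em by blast
        have nr: "n = r * t0" using mt r by simp
        have "4 * t0 \<le> m * t0" using m4 by simp
        then have t2: "2 * t0 < 2 * n" using mt t0(1) by linarith
        have nH: "(int n, 0) \<in> H" using HHt nr np by (auto simp: Ht_def)
        have h1: "(int t0, 0) \<in> H" "(int (2 * t0), 0) \<in> H" using HHt t2 by (auto simp: Ht_def)
        have bc: "(0, 1) \<in> carrier (Dic n)" using np by (simp add: Dic_carrier)
        have bb: "(0, 1) \<otimes>\<^bsub>Dic n\<^esub> (0, 1) = (int n, 0)" using np by (simp add: Dic_mult)
        have hne: "(int t0, 0) \<noteq> \<one>\<^bsub>Dic n\<^esub>" "(int (2 * t0), 0) \<noteq> \<one>\<^bsub>Dic n\<^esub>"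
           "(int t0, 0) \<noteq> (int (2 * t0), (0::int))" using one t0(1) by auto
        have "\<exists>z\<in>carrier (Dic n). z \<otimes>\<^bsub>Dic n\<^esub> inv\<^bsub>Dic n\<^esub> (0, 1) \<in> H \<and> z \<otimes>\<^bsub>Dic n\<^esub> z = \<one>\<^bsub>Dic n\<^esub>"
        proof (rule ccontr)
          assume "\<not> ?thesis"
          then show False using NEC[OF bc _ _ h1 hne] bb nH by auto
        qed
        then obtain z where z: "z \<in> carrier (Dic n)" "z \<otimes>\<^bsub>Dic n\<^esub> inv\<^bsub>Dic n\<^esub> (0, 1) \<in> H" "z \<otimes>\<^bsub>Dic n\<^esub> z = \<one>\<^bsub>Dic n\<^esub>"
          by blast
        have ib: "inv\<^bsub>Dic n\<^esub> (0, 1) = (int n, 1)" using Dic_inv1[OF grp, of 0] np by simp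
        have "z = (0,0) \<or> z = (int n, 0)" using sq_one_Dic[OF assms(1) z(1,3)] .
        then have "snd (z \<otimes>\<^bsub>Dic n\<^esub> inv\<^bsub>Dic n\<^esub> (0, 1)) = 1" using ib by (auto simp: Dic_mult)
        then show False using A[OF z(2)] by simp
      qed
      show ?thesis using t0(1) t0dvd gen cond by blast
    qed
  next
    show "H = carrier (Dic n) \<or>
            (\<exists>t::nat. t > 0 \<and> t dvd 2 * n \<and>
               H = generate (Dic n) {dic_a n [^]\<^bsub>Dic n\<^esub> t} \<and>
               (odd (2 * n div t) \<or> 2 * n div t = 2)) \<Longrightarrow> \<exists>C. perfect_code (Dic n) H C"
    proof -
      assume R: "H = carrier (Dic n) \<or>
            (\<exists>t::nat. t > 0 \<and> t dvd 2 * n \<and>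
               H = generate (Dic n) {dic_a n [^]\<^bsub>Dic n\<^esub> t} \<and>
               (odd (2 * n div t) \<or> 2 * n div t = 2))"
      show "\<exists>C. perfect_code (Dic n) H C"
      proof (cases "H = carrier (Dic n)")
      case True
      note HC = True
      show ?thesis
      proof (rule grp.pc_suff[OF assms(2)], rule disjI2, intro ballI impI)
        fix g assume "g \<in> carrier (Dic n)"
        then show "\<exists>z\<in>carrier (Dic n). z \<otimes>\<^bsub>Dic n\<^esub> inv\<^bsub>Dic n\<^esub> g \<in> H \<and> z \<otimes>\<^bsub>Dic n\<^esub> z = \<one>\<^bsub>Dic n\<^esub>"
          using HC by (intro bexI[of _ "\<one>\<^bsub>Dic n\<^esub>"]) auto
      qed
    next
      case False
      then obtain t where t: "t > 0" "t dvd 2 * n" and Hg: "H = generate (Dic n) {dic_a n [^]\<^bsub>Dic n\<^esub> t}"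
        and c: "odd (2 * n div t) \<or> 2 * n div t = 2" using R by blast
      have HHt: "H = Ht n t" using Dic_gen[OF grp assms(1) t] Hg by simp
      define m where "m = 2 * n div t"
      have mt: "t * m = 2 * n" using t m_def by simp
      have tdvd: "int t dvd 2 * int n" using t(2) by (metis of_nat_dvd_iff of_nat_mult of_nat_numeral)
      show ?thesis
      proof (cases "2 * n div t = 2")
        case True
        then have tn: "t = n" using mt m_def by simp
        show ?thesis
        proof (rule grp.pc_suff[OF assms(2)], rule disjI1, intro ballI impI)
          fix u v assume "u \<in> H" "v \<in> H" "u \<noteq> \<one>\<^bsub>Dic n\<^esub>" "v \<noteq> \<one>\<^bsub>Dic n\<^esub>"
          then have "u \<in> Ht n n" "v \<in> Ht n n" "u \<noteq> (0,0)" "v \<noteq> (0,0)" using HHt tn one by auto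
          then show "u = v" using Ht_n[OF assms(1)] by metis
        qed
      next
        case False
        then have om: "odd (2 * n div t)" using c by simp
        have mt': "int t * int m = 2 * int n" using mt by (metis of_nat_mult of_nat_numeral)
        have omi: "odd (int m)" using om m_def by simp
        show ?thesis
        proof (rule grp.pc_suff[OF assms(2)], rule disjI2, intro ballI impI)
          fix g assume gc: "g \<in> carrier (Dic n)" and ggH: "g \<otimes>\<^bsub>Dic n\<^esub> g \<in> H"
          obtain i j where g: "g = (i, j)" by (cases g)
          have r: "0 \<le> i" "i < 2 * int n" "j = 0 \<or> j = 1" using gc g by (auto simp: Dic_carrier)
          show "\<exists>z\<in>carrier (Dic n). z \<otimes>\<^bsub>Dic n\<^esub> inv\<^bsub>Dic n\<^esub> g \<in> H \<and> z \<otimes>\<^bsub>Dic n\<^esub> z = \<one>\<^bsub>Dic n\<^esub>"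
          proof (cases "j = 0")
            case False
            then have "j = 1" using r by simp
            then have "g \<otimes>\<^bsub>Dic n\<^esub> g = (int n, 0)" using g np by (simp add: Dic_mult)
            then have "int t dvd int n" using ggH HHt by (auto simp: Ht_def)
            then have "t dvd n" by simp
            then obtain q where "n = t * q" by blast
            then have "m = 2 * q" using mt t(1) by simp
            then show ?thesis using omi by simp
          next
            case True
            have "g \<otimes>\<^bsub>Dic n\<^esub> g = ((i + i) mod (2 * int n), 0)" using g True by (simp add: Dic_mult)
            then have "int t dvd (i + i) mod (2 * int n)" using ggH HHt by (auto simp: Ht_def)
            then have "int t dvd i + i" using dvd_mod_iff[OF tdvd, of "i + i"] by blast
            then have "int t dvd 2 * i" by (metis mult_2)
            then have sp: "int t dvd i \<or> int t dvd (int n - i)" using odd_split[OF mt' omi] by blast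
            have ig: "inv\<^bsub>Dic n\<^esub> g = ((- i) mod (2 * int n), 0)" using Dic_inv0[OF grp r(1,2)] g True by simp
            from sp show ?thesis
            proof
              assume "int t dvd i"
              then have "int t dvd (- i) mod (2 * int n)" using tdvd by (simp add: dvd_mod_iff)
              then have "(0, 0) \<otimes>\<^bsub>Dic n\<^esub> inv\<^bsub>Dic n\<^esub> g \<in> H" using ig HHt np by (simp add: Dic_mult Ht_def)
              moreover have "(0::int, 0::int) \<in> carrier (Dic n)" using np by (simp add: Dic_carrier)
              ultimately show ?thesis using one by (intro bexI[of _ "(0,0)"]) (auto simp: Dic_mult)
            next
              assume d: "int t dvd (int n - i)"
              have "(int n + (- i) mod (2 * int n)) mod (2 * int n) = (int n - i) mod (2 * int n)"
                by (simp add: mod_add_right_eq)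
              moreover have "int t dvd (int n - i) mod (2 * int n)" using d tdvd by (simp add: dvd_mod_iff)
              ultimately have "(int n, 0) \<otimes>\<^bsub>Dic n\<^esub> inv\<^bsub>Dic n\<^esub> g \<in> H" using ig HHt np by (simp add: Dic_mult Ht_def)
              moreover have "(int n, 0::int) \<in> carrier (Dic n)" using np by (simp add: Dic_carrier)
              moreover have "(int n, 0::int) \<otimes>\<^bsub>Dic n\<^esub> (int n, 0) = \<one>\<^bsub>Dic n\<^esub>" using one by (simp add: Dic_mult)
              ultimately show ?thesis by blast
            qed
          qed
        qed
      qed
    qed
    qed
  qed
qed

end
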